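(* Let $K$ be a field and $|\cdot|:K\to R$ a multiplicative generalized seminorm. Suppose that either there exists $u\in K$ with $|u|>2$, or there exists $a\in K$ with $|a|>0$ such that for all $b\in K$, $|b|<|a|$ implies $|b|=0$. Then $K$ has tiny balls for $|\cdot|$, so that $|\cdot|$ induces a ring topology (the ball neighborhood topology) on $K$, and this topology is separated (Hausdorff).
   Context: A halo is a commutative unital semiring with a partial order compatible with $+$ and $\cdot$; an aura is a halo whose semiring is a semifield; positive means $0<1$. A generalized seminorm is a map $|\cdot|:A\to R$ into a positive totally ordered aura with $|0|=0,|1|=1$, $|a+b|\le|a|+|b|$, $|ab|\le|a||b|$; multiplicative if $|ab|=|a||b|$; $2=1+1$. For $x,a\in A$ with $|a|>0$, $B(x,|a|)=\{z:|z-x|<|a|\}$. $|\cdot|$ has tiny balls if for every $a$ with $|a|>0$: there is $a'$ with $|a'|>0$ and $B(0,|a'|)+B(0,|a'|)\subset B(0,|a|)$; for every $x\in A$ there is $c$ with $|c|>0$ and $xB(0,|c|)\subset B(0,|a|)$; there is $a'$ with $|a'|>0$ and $B(0,|a'|)B(0,|a'|)\subset B(0,|a|)$; there is $a'$ with $|a'|>0$ and $-B(0,|a'|)\subset B(0,|a|)$. The ball neighborhood topology is the topology in which the non-empty open balls centered at each point form a fundamental system of neighborhoods of that point. *)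

theory Defs
  imports "HOL-Analysis.Analysis"
begin

definition pos_tot_aura :: "'r::{comm_semiring_1, linorder} itself \<Rightarrow> bool" where
  "pos_tot_aura _ \<longleftrightarrow>
     (\<forall>a b c :: 'r. a \<le> b \<longrightarrow> a + c \<le> b + c) \<and>
     (\<forall>a b c :: 'r. a \<le> b \<longrightarrow> a * c \<le> b * c) \<and>
     (\<forall>a :: 'r. a \<noteq> 0 \<longrightarrow> (\<exists>b. a * b = 1)) \<and>
     (0 :: 'r) < 1"

definition gen_seminorm :: "('a::ring_1 \<Rightarrow> 'r::{comm_semiring_1, linorder}) \<Rightarrow> bool" where
  "gen_seminorm N \<longleftrightarrow> pos_tot_aura TYPE('r) \<and>
     N 0 = 0 \<and> N 1 = 1 \<and>
     (\<forall>a b. N (a + b) \<le> N a + N b) \<and>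
     (\<forall>a b. N (a * b) \<le> N a * N b)"

definition mult_gen_seminorm :: "('a::ring_1 \<Rightarrow> 'r::{comm_semiring_1, linorder}) \<Rightarrow> bool" where
  "mult_gen_seminorm N \<longleftrightarrow> gen_seminorm N \<and> (\<forall>a b. N (a * b) = N a * N b)"

definition nball :: "('a::ring_1 \<Rightarrow> 'r::linorder) \<Rightarrow> 'a \<Rightarrow> 'r \<Rightarrow> 'a set" where
  "nball N x r = {z. N (z - x) < r}"

definition tiny_balls :: "('a::ring_1 \<Rightarrow> 'r::{comm_semiring_1, linorder}) \<Rightarrow> bool" where
  "tiny_balls N \<longleftrightarrow>
     (\<forall>a. 0 < N a \<longrightarrow>
        (\<exists>a'. 0 < N a' \<and> {y + z | y z. y \<in> nball N 0 (N a') \<and> z \<in> nball N 0 (N a')} \<subseteq> nball N 0 (N a)) \<and>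
        (\<forall>x. \<exists>c. 0 < N c \<and> (\<lambda>z. x * z) ` nball N 0 (N c) \<subseteq> nball N 0 (N a)) \<and>
        (\<exists>a'. 0 < N a' \<and> {y * z | y z. y \<in> nball N 0 (N a') \<and> z \<in> nball N 0 (N a')} \<subseteq> nball N 0 (N a)) \<and>
        (\<exists>a'. 0 < N a' \<and> uminus ` nball N 0 (N a') \<subseteq> nball N 0 (N a)))"

definition ball_topology :: "('a::ring_1 \<Rightarrow> 'r::{comm_semiring_1, linorder}) \<Rightarrow> 'a topology" where
  "ball_topology N = topology (\<lambda>U. \<forall>x\<in>U. \<exists>a. 0 < N a \<and> nball N x (N a) \<subseteq> U)"

definition balls_nhd_base :: "('a::ring_1 \<Rightarrow> 'r::{comm_semiring_1, linorder}) \<Rightarrow> 'a topology \<Rightarrow> bool" where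
  "balls_nhd_base N T \<longleftrightarrow> topspace T = UNIV \<and>
     (\<forall>x a. 0 < N a \<longrightarrow> (\<exists>U. openin T U \<and> x \<in> U \<and> U \<subseteq> nball N x (N a))) \<and>
     (\<forall>x U. openin T U \<and> x \<in> U \<longrightarrow> (\<exists>a. 0 < N a \<and> nball N x (N a) \<subseteq> U))"

definition ring_topology :: "'a::ring_1 topology \<Rightarrow> bool" where
  "ring_topology T \<longleftrightarrow> topspace T = UNIV \<and>
     continuous_map (prod_topology T T) T (\<lambda>(x, y). x + y) \<and>
     continuous_map (prod_topology T T) T (\<lambda>(x, y). x * y) \<and>
     continuous_map T T uminus"

end

theory Submission
  imports Defs
begin

lemma pta_nonneg:
  assumes "pos_tot_aura TYPE('r::{comm_semiring_1, linorder})"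
  shows "0 \<le> (c::'r)"
proof -
  from assms have "(0::'r) \<le> 1" "\<forall>a b c::'r. a \<le> b \<longrightarrow> a*c \<le> b*c"
    by (auto simp: pos_tot_aura_def)
  then have "0*c \<le> 1*c" by blast
  thus ?thesis by simp
qed

lemma pta_mult_le:
  assumes "pos_tot_aura TYPE('r::{comm_semiring_1, linorder})" "(a::'r) \<le> b"
  shows "a*c \<le> b*c" "c*a \<le> c*b"
  using assms by (auto simp: pos_tot_aura_def mult.commute[of c])

lemma pta_add_le:
  assumes "pos_tot_aura TYPE('r::{comm_semiring_1, linorder})" "(a::'r) \<le> b" "c \<le> d"
  shows "a+c \<le> b+d"
proof -
  have m: "\<forall>a b c::'r. a \<le> b \<longrightarrow> a + c \<le> b + c" using assms(1) by (auto simp: pos_tot_aura_def)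
  have "a + c \<le> b + c" using m assms(2) by blast
  also have "b + c = c + b" by (simp add: add.commute)
  also have "\<dots> \<le> d + b" using m assms(3) by blast
  finally show ?thesis by (simp add: add.commute)
qed

lemma pta_mult_less:
  assumes "pos_tot_aura TYPE('r::{comm_semiring_1, linorder})" "(a::'r) < b" "0 < c"
  shows "a*c < b*c"
proof -
  have le: "a*c \<le> b*c" using pta_mult_le(1)[OF assms(1)] assms(2) by auto
  have inv: "\<forall>a :: 'r. a \<noteq> 0 \<longrightarrow> (\<exists>b. a * b = 1)" using assms(1) by (simp add: pos_tot_aura_def)
  have "c \<noteq> 0" using assms(3) by simp
  then obtain d where d: "c*d = 1" using inv by blast
  have "a*c \<noteq> b*c"
  proof
    assume "a*c = b*c"
    then have "a*c*d = b*c*d" by simp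
    then have "a = b" using d by (simp add: mult.assoc)
    thus False using assms(2) by simp
  qed
  thus ?thesis using le by simp
qed

lemma pta_mult_le2:
  assumes "pos_tot_aura TYPE('r::{comm_semiring_1, linorder})" "(a::'r) \<le> b" "c \<le> d"
  shows "a*c \<le> b*d"
proof -
  have "a*c \<le> b*c" using pta_mult_le(1)[OF assms(1,2)] .
  also have "\<dots> \<le> b*d" using pta_mult_le(2)[OF assms(1,3)] .
  finally show ?thesis .
qed

lemma N_pos:
  fixes N :: "'k::field \<Rightarrow> 'r::{comm_semiring_1, linorder}"
  assumes "mult_gen_seminorm N" "x \<noteq> 0"
  shows "0 < N x"
proof -
  have pta: "pos_tot_aura TYPE('r)" and m: "\<forall>a b. N (a*b) = N a * N b" and n1: "N 1 = 1"
    using assms(1) by (auto simp: mult_gen_seminorm_def gen_seminorm_def)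
  have "N (x * inverse x) = N x * N (inverse x)" using m by blast
  moreover have "x * inverse x = 1" using assms(2) by simp
  ultimately have "N x * N (inverse x) = 1" using n1 by simp
  then have "N x \<noteq> 0" by auto
  thus ?thesis using pta_nonneg[OF pta, of "N x"] by auto
qed

lemma N_minus:
  fixes N :: "'k::field \<Rightarrow> 'r::{comm_semiring_1, linorder}"
  assumes "mult_gen_seminorm N"
  shows "N (- x) = N x"
proof -
  have pta: "pos_tot_aura TYPE('r)" and m: "\<forall>a b. N (a*b) = N a * N b" and n1: "N 1 = 1"
    using assms(1) by (auto simp: mult_gen_seminorm_def gen_seminorm_def)
  define t where "t = N (-1)"
  have "N ((-1) * (-1)) = t * t" using m unfolding t_def by blast
  then have tt: "t*t = 1" using n1 by simp
  have "t = 1"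
  proof (rule ccontr)
    assume "t \<noteq> 1"
    then consider "t < 1" | "1 < t" by (meson linorder_neqE)
    then show False
    proof cases
      case 1
      then have "t*t \<le> 1*t" using pta_mult_le(1)[OF pta less_imp_le[OF 1], of t] by simp
      then show False using tt 1 by simp
    next
      case 2
      then have "1*t \<le> t*t" using pta_mult_le(1)[OF pta less_imp_le[OF 2], of t] by simp
      then show False using tt 2 by simp
    qed
  qed
  have "N (-x) = N (-1 * x)" by simp
  also have "\<dots> = t * N x" using m unfolding t_def by blast
  finally show ?thesis using \<open>t = 1\<close> by simp
qed

lemma N_sym:
  fixes N :: "'k::field \<Rightarrow> 'r::{comm_semiring_1, linorder}"
  assumes "mult_gen_seminorm N"
  shows "N (x - y) = N (y - x)"
  using N_minus[OF assms, of "y - x"] by simp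


lemma pta_01: "pos_tot_aura TYPE('r::{comm_semiring_1, linorder}) \<Longrightarrow> (0::'r) < 1"
  by (simp add: pos_tot_aura_def)

lemma nball_iff: "z \<in> nball N x r \<longleftrightarrow> N (z - x) < r"
  by (simp add: nball_def)

lemma N_facts:
  fixes N :: "'k::field \<Rightarrow> 'r::{comm_semiring_1, linorder}"
  assumes "mult_gen_seminorm N"
  shows "pos_tot_aura TYPE('r)" "N 0 = 0" "N 1 = 1" "\<And>a b. N (a + b) \<le> N a + N b"
    "\<And>a b. N (a*b) = N a * N b"
  using assms by (auto simp: mult_gen_seminorm_def gen_seminorm_def)

lemma tiny_mult_left:
  fixes N :: "'k::field \<Rightarrow> 'r::{comm_semiring_1, linorder}"
  assumes "mult_gen_seminorm N" "0 < N a"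
  shows "\<exists>c. 0 < N c \<and> (\<forall>t. N t < N c \<longrightarrow> N (x*t) < N a)"
proof (cases "x = 0")
  case True
  then show ?thesis using N_facts[OF assms(1)] assms(2) pta_01[OF N_facts(1)[OF assms(1)]]
    by (intro exI[of _ 1]) auto
next
  case False
  note F = N_facts[OF assms(1)]
  have px: "0 < N x" using N_pos[OF assms(1) False] .
  have "N (x * inverse x) = N x * N (inverse x)" by (rule F(5))
  then have inv: "N x * N (inverse x) = 1" using F(3) False by simp
  have "inverse x \<noteq> 0" using False by simp
  then have "0 < N (inverse x)" using N_pos[OF assms(1)] by blast
  then have "0 * N (inverse x) < N a * N (inverse x)" using pta_mult_less[OF F(1) assms(2)] by blast
  then have pc: "0 < N (a * inverse x)" using F(5)[of a "inverse x"] by simp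
  show ?thesis
  proof (intro exI[of _ "a * inverse x"] conjI allI impI)
    show "0 < N (a * inverse x)" by fact
    fix t assume "N t < N (a * inverse x)"
    then have "N t * N x < N (a * inverse x) * N x" using pta_mult_less[OF F(1) _ px] by blast
    also have "N (a * inverse x) * N x = N a * (N x * N (inverse x))" using F(5)[of a "inverse x"] by (simp add: ac_simps)
    also have "\<dots> = N a" using inv by simp
    finally show "N (x*t) < N a" using F(5) by (simp add: mult.commute)
  qed
qed

lemma tiny_prod:
  fixes N :: "'k::field \<Rightarrow> 'r::{comm_semiring_1, linorder}"
  assumes "mult_gen_seminorm N" "0 < N a"
  shows "\<exists>e. 0 < N e \<and> (\<forall>s t. N s < N e \<longrightarrow> N t < N e \<longrightarrow> N (s*t) < N a)"
proof -
  note F = N_facts[OF assms(1)]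
  obtain e where e: "0 < N e" "N e * N e \<le> N a"
  proof (cases "N a \<le> 1")
    case True
    then have "N a * N a \<le> N a * 1" using pta_mult_le(2)[OF F(1)] by blast
    then show ?thesis using that assms(2) by simp
  next
    case False
    then have "1 * 1 \<le> N a" by simp
    then show ?thesis using that[of 1] F(3) pta_01[OF F(1)] by simp
  qed
  show ?thesis
  proof (intro exI[of _ e] conjI allI impI)
    show "0 < N e" by fact
    fix s t assume st: "N s < N e" "N t < N e"
    have "N s * N t \<le> N s * N e" using pta_mult_le(2)[OF F(1)] st(2) by simp
    also have "\<dots> < N e * N e" using pta_mult_less[OF F(1) st(1) e(1)] .
    also have "\<dots> \<le> N a" by fact
    finally show "N (s*t) < N a" using F(5) by simp
  qed
qed

lemma tiny_add:
  fixes N :: "'k::field \<Rightarrow> 'r::{comm_semiring_1, linorder}"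
  assumes "mult_gen_seminorm N"
    and "(\<exists>u. N u > 2) \<or> (\<exists>a. 0 < N a \<and> (\<forall>b. N b < N a \<longrightarrow> N b = 0))"
    and "0 < N a"
  shows "\<exists>a'. 0 < N a' \<and> (\<forall>y z. N y < N a' \<longrightarrow> N z < N a' \<longrightarrow> N (y+z) < N a)"
  using assms(2)
proof
  note F = N_facts[OF assms(1)]
  assume "\<exists>u. N u > 2"
  then obtain u where u: "N u > 2" by blast
  have "(0::'r) \<le> 1" using pta_nonneg[OF F(1)] .
  then have "(1::'r) \<le> 2" using pta_add_le[OF F(1), of 0 1 1 1] by simp
  then have "u \<noteq> 0" using u F(2) pta_nonneg[OF F(1), of 2] by auto
  then have pu: "0 < N (inverse u)" using N_pos[OF assms(1)] by simp
  have "N (u * inverse u) = N u * N (inverse u)" by (rule F(5))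
  then have inv: "N u * N (inverse u) = 1" using F(3) \<open>u \<noteq> 0\<close> by simp
  have pa': "0 < N (a * inverse u)" using F(5) pta_mult_less[OF F(1) assms(3) pu] by simp
  show ?thesis
  proof (intro exI[of _ "a * inverse u"] conjI allI impI)
    show "0 < N (a * inverse u)" by fact
    fix y z assume yz: "N y < N (a * inverse u)" "N z < N (a * inverse u)"
    have "N (y+z) \<le> N y + N z" by (rule F(4))
    also have "\<dots> \<le> N (a * inverse u) + N (a * inverse u)"
      using pta_add_le[OF F(1) less_imp_le[OF yz(1)] less_imp_le[OF yz(2)]] .
    also have "\<dots> = 2 * N (a * inverse u)" by (simp add: mult_2)
    also have "\<dots> < N u * N (a * inverse u)" using pta_mult_less[OF F(1) u pa'] .
    also have "\<dots> = N a" using F(5) inv by (simp add: mult.assoc mult.commute mult.left_commute)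
    finally show "N (y+z) < N a" .
  qed
next
  note F = N_facts[OF assms(1)]
  assume "\<exists>a. 0 < N a \<and> (\<forall>b. N b < N a \<longrightarrow> N b = 0)"
  then obtain a0 where a0: "0 < N a0" "\<forall>b. N b < N a0 \<longrightarrow> N b = 0" by blast
  show ?thesis
  proof (intro exI[of _ a0] conjI allI impI)
    fix y z assume "N y < N a0" "N z < N a0"
    then have "N y = 0" "N z = 0" using a0(2) by blast+
    then have "y = 0" "z = 0" using N_pos[OF assms(1), of y] N_pos[OF assms(1), of z] by auto
    then show "N (y+z) < N a" using F(2) assms(3) by simp
  qed (rule a0(1))
qed


definition ballopen :: "('a::ring_1 \<Rightarrow> 'r::{comm_semiring_1, linorder}) \<Rightarrow> 'a set \<Rightarrow> bool" where
  "ballopen N U \<longleftrightarrow> (\<forall>x\<in>U. \<exists>a. 0 < N a \<and> nball N x (N a) \<subseteq> U)"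

lemma min_rad:
  fixes N :: "'a \<Rightarrow> 'r::{zero,linorder}"
  assumes "0 < N a" "0 < N b"
  shows "\<exists>d. 0 < N d \<and> N d \<le> N a \<and> N d \<le> N b"
proof (cases "N a \<le> N b")
  case True
  then show ?thesis using assms by (intro exI[of _ a]) simp
next
  case False
  then show ?thesis using assms by (intro exI[of _ b]) simp
qed

lemma nball_mono:
  fixes N :: "'a::ring_1 \<Rightarrow> 'r::linorder"
  shows "r \<le> s \<Longrightarrow> nball N x r \<subseteq> nball N x s"
  by (auto simp: nball_def)

lemma istop_ballopen:
  fixes N :: "'k::field \<Rightarrow> 'r::{comm_semiring_1, linorder}"
  shows "istopology (ballopen N)"
  unfolding istopology_def
proof (intro conjI allI impI)
  fix S T assume S: "ballopen N S" and T: "ballopen N T"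
  show "ballopen N (S \<inter> T)" unfolding ballopen_def
  proof
    fix x assume "x \<in> S \<inter> T"
    then have xS: "x \<in> S" and xT: "x \<in> T" by auto
    obtain a where a: "0 < N a" "nball N x (N a) \<subseteq> S"
      using S xS unfolding ballopen_def by blast
    obtain b where b: "0 < N b" "nball N x (N b) \<subseteq> T"
      using T xT unfolding ballopen_def by blast
    obtain d where d: "0 < N d" "N d \<le> N a" "N d \<le> N b" using min_rad[of N a b, OF a(1) b(1)] by blast
    have "nball N x (N d) \<subseteq> S" using nball_mono[OF d(2), of N x] a(2) by (rule order_trans)
    moreover have "nball N x (N d) \<subseteq> T" using nball_mono[OF d(3), of N x] b(2) by (rule order_trans)
    ultimately show "\<exists>a. 0 < N a \<and> nball N x (N a) \<subseteq> S \<inter> T"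
      using d(1) by blast
  qed
next
  fix K assume "\<forall>K\<in>K. ballopen N K"
  show "ballopen N (\<Union>K)" unfolding ballopen_def
  proof
    fix x assume "x \<in> \<Union>K"
    then obtain K0 where K0: "K0 \<in> K" "x \<in> K0" by blast
    then have "ballopen N K0" using \<open>\<forall>K\<in>K. ballopen N K\<close> by blast
    then obtain a where a: "0 < N a" "nball N x (N a) \<subseteq> K0" using K0(2) unfolding ballopen_def by blast
    then have "nball N x (N a) \<subseteq> \<Union>K" using K0(1) by blast
    then show "\<exists>a. 0 < N a \<and> nball N x (N a) \<subseteq> \<Union>K" using a(1) by blast
  qed
qed

lemma openin_bt: "openin (ball_topology (N::'k::field \<Rightarrow> 'r::{comm_semiring_1, linorder})) = ballopen N"
proof -
  have "(\<lambda>U. \<forall>x\<in>U. \<exists>a. 0 < N a \<and> nball N x (N a) \<subseteq> U) = ballopen N"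
    by (rule ext) (simp add: ballopen_def)
  then show ?thesis unfolding ball_topology_def using istop_ballopen[of N] by simp
qed

lemma topspace_bt:
  fixes N :: "'k::field \<Rightarrow> 'r::{comm_semiring_1, linorder}"
  assumes "mult_gen_seminorm N"
  shows "topspace (ball_topology N) = UNIV"
proof -
  have "0 < N 1" using N_facts(3)[OF assms] pta_01[OF N_facts(1)[OF assms]] by simp
  then have "ballopen N UNIV" unfolding ballopen_def by blast
  then show ?thesis unfolding topspace_def openin_bt by blast
qed

lemma open_sub_ball:
  fixes N :: "'k::field \<Rightarrow> 'r::{comm_semiring_1, linorder}"
  assumes "mult_gen_seminorm N"
    and TA: "\<And>a. 0 < N a \<Longrightarrow> \<exists>a'. 0 < N a' \<and> (\<forall>y z. N y < N a' \<longrightarrow> N z < N a' \<longrightarrow> N (y+z) < N a)"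
    and "0 < N a"
  shows "\<exists>U. ballopen N U \<and> x \<in> U \<and> U \<subseteq> nball N x (N a)"
proof -
  note F = N_facts[OF assms(1)]
  define U where "U = {y. \<exists>b. 0 < N b \<and> nball N y (N b) \<subseteq> nball N x (N a)}"
  have "x \<in> U" unfolding U_def using assms(3) by blast
  moreover have "U \<subseteq> nball N x (N a)"
  proof
    fix y assume "y \<in> U"
    then obtain b where "0 < N b" "nball N y (N b) \<subseteq> nball N x (N a)" unfolding U_def by blast
    moreover have "y \<in> nball N y (N b)" using calculation(1) F(2) by (simp add: nball_def)
    ultimately show "y \<in> nball N x (N a)" by blast
  qed
  moreover have "ballopen N U" unfolding ballopen_def
  proof
    fix y assume "y \<in> U"
    then obtain b where b: "0 < N b" "nball N y (N b) \<subseteq> nball N x (N a)" unfolding U_def by blast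
    obtain b' where b': "0 < N b'" "\<forall>y z. N y < N b' \<longrightarrow> N z < N b' \<longrightarrow> N (y+z) < N b"
      using TA[OF b(1)] by blast
    have "nball N y (N b') \<subseteq> U"
    proof
      fix w assume w: "w \<in> nball N y (N b')"
      have "nball N w (N b') \<subseteq> nball N y (N b)"
      proof
        fix w' assume "w' \<in> nball N w (N b')"
        then have "N (w' - w) < N b'" "N (w - y) < N b'" using w by (simp_all add: nball_def)
        then have "N ((w' - w) + (w - y)) < N b" using b'(2) by blast
        moreover have "(w' - w) + (w - y) = w' - y" by simp
        ultimately show "w' \<in> nball N y (N b)" by (simp add: nball_def)
      qed
      then show "w \<in> U" unfolding U_def using b'(1) b(2) by blast
    qed
    then show "\<exists>a. 0 < N a \<and> nball N y (N a) \<subseteq> U" using b'(1) by blast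
  qed
  ultimately show ?thesis by blast
qed


lemma cont_prod:
  fixes N :: "'k::field \<Rightarrow> 'r::{comm_semiring_1, linorder}"
  assumes mg: "mult_gen_seminorm N"
    and TA: "\<And>a. 0 < N a \<Longrightarrow> \<exists>a'. 0 < N a' \<and> (\<forall>y z. N y < N a' \<longrightarrow> N z < N a' \<longrightarrow> N (y+z) < N a)"
    and loc: "\<And>x y a. 0 < N a \<Longrightarrow> \<exists>b c. 0 < N b \<and> 0 < N c \<and>
        (\<forall>x' y'. N (x' - x) < N b \<longrightarrow> N (y' - y) < N c \<longrightarrow> N (g x' y' - g x y) < N a)"
  shows "continuous_map (prod_topology (ball_topology N) (ball_topology N)) (ball_topology N) (\<lambda>(x, y). g x y)"
  unfolding continuous_map_def
proof (intro conjI allI impI)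
  show "(\<lambda>(x, y). g x y) \<in> topspace (prod_topology (ball_topology N) (ball_topology N)) \<rightarrow> topspace (ball_topology N)"
    using topspace_bt[OF mg] by simp
  fix U assume U: "openin (ball_topology N) U"
  show "openin (prod_topology (ball_topology N) (ball_topology N))
     {x \<in> topspace (prod_topology (ball_topology N) (ball_topology N)). (\<lambda>(x, y). g x y) x \<in> U}"
    (is "openin ?P ?S")
  proof (subst openin_subopen, intro ballI)
    fix p assume "p \<in> ?S"
    then obtain x y where p: "p = (x, y)" "g x y \<in> U" by (cases p) auto
    obtain a where a: "0 < N a" "nball N (g x y) (N a) \<subseteq> U"
      using U p(2) unfolding openin_bt ballopen_def by blast
    obtain b c where bc: "0 < N b" "0 < N c"
      "\<forall>x' y'. N (x' - x) < N b \<longrightarrow> N (y' - y) < N c \<longrightarrow> N (g x' y' - g x y) < N a"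
      using loc[OF a(1)] by blast
    obtain U1 where U1: "ballopen N U1" "x \<in> U1" "U1 \<subseteq> nball N x (N b)"
      using open_sub_ball[OF mg TA bc(1)] by blast
    obtain U2 where U2: "ballopen N U2" "y \<in> U2" "U2 \<subseteq> nball N y (N c)"
      using open_sub_ball[OF mg TA bc(2)] by blast
    have "openin ?P (U1 \<times> U2)" using U1(1) U2(1) by (simp add: openin_prod_Times_iff openin_bt)
    moreover have "U1 \<times> U2 \<subseteq> ?S"
    proof
      fix q assume "q \<in> U1 \<times> U2"
      then obtain x' y' where q: "q = (x', y')" "x' \<in> U1" "y' \<in> U2" by blast
      then have "N (x' - x) < N b" "N (y' - y) < N c" using U1(3) U2(3) by (auto simp: nball_def)
      then have "g x' y' \<in> nball N (g x y) (N a)" using bc(3) by (simp add: nball_def)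
      then show "q \<in> ?S" using a(2) q(1) topspace_bt[OF mg] by auto
    qed
    ultimately show "\<exists>T. openin ?P T \<and> p \<in> T \<and> T \<subseteq> ?S" using p(1) U1(2) U2(2) by blast
  qed
qed

lemma cont_neg:
  fixes N :: "'k::field \<Rightarrow> 'r::{comm_semiring_1, linorder}"
  assumes mg: "mult_gen_seminorm N"
    and TA: "\<And>a. 0 < N a \<Longrightarrow> \<exists>a'. 0 < N a' \<and> (\<forall>y z. N y < N a' \<longrightarrow> N z < N a' \<longrightarrow> N (y+z) < N a)"
  shows "continuous_map (ball_topology N) (ball_topology N) uminus"
  unfolding continuous_map_def
proof (intro conjI allI impI)
  show "uminus \<in> topspace (ball_topology N) \<rightarrow> topspace (ball_topology N)"
    using topspace_bt[OF mg] by simp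
  fix U assume U: "openin (ball_topology N) U"
  show "openin (ball_topology N) {x \<in> topspace (ball_topology N). - x \<in> U}" (is "openin ?P ?S")
  proof (subst openin_subopen, intro ballI)
    fix x assume "x \<in> ?S"
    then have x: "- x \<in> U" by simp
    obtain a where a: "0 < N a" "nball N (- x) (N a) \<subseteq> U"
      using U x unfolding openin_bt ballopen_def by blast
    obtain U1 where U1: "ballopen N U1" "x \<in> U1" "U1 \<subseteq> nball N x (N a)"
      using open_sub_ball[OF mg TA a(1)] by blast
    have "U1 \<subseteq> ?S"
    proof
      fix x' assume "x' \<in> U1"
      then have "N (x' - x) < N a" using U1(3) by (auto simp: nball_def)
      moreover have "N (- x' - - x) = N (x' - x)" using N_minus[OF mg, of "x' - x"] by simp
      ultimately have "- x' \<in> nball N (- x) (N a)" by (simp add: nball_def)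
      then show "x' \<in> ?S" using a(2) topspace_bt[OF mg] by auto
    qed
    moreover have "openin ?P U1" using U1(1) by (simp add: openin_bt)
    ultimately show "\<exists>T. openin ?P T \<and> x \<in> T \<and> T \<subseteq> ?S" using U1(2) by blast
  qed
qed


theorem proposition4p7:
  fixes N :: "'k::field \<Rightarrow> 'r::{comm_semiring_1, linorder}"
  assumes "mult_gen_seminorm N"
    and "(\<exists>u. N u > 2) \<or> (\<exists>a. 0 < N a \<and> (\<forall>b. N b < N a \<longrightarrow> N b = 0))"
  shows "tiny_balls N \<and> balls_nhd_base N (ball_topology N) \<and>
         ring_topology (ball_topology N) \<and> Hausdorff_space (ball_topology N)"
proof -
  note mg = assms(1)
  note F = N_facts[OF mg]
  have TA: "\<And>a. 0 < N a \<Longrightarrow> \<exists>a'. 0 < N a' \<and> (\<forall>y z. N y < N a' \<longrightarrow> N z < N a' \<longrightarrow> N (y+z) < N a)"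
    using tiny_add[OF mg assms(2)] by blast
  have tb: "tiny_balls N" unfolding tiny_balls_def
  proof (intro allI impI conjI)
    fix a assume a: "0 < N a"
    obtain a' where a': "0 < N a'" "\<forall>y z. N y < N a' \<longrightarrow> N z < N a' \<longrightarrow> N (y+z) < N a"
      using TA[OF a] by blast
    show "\<exists>a'. 0 < N a' \<and> {y + z |y z. y \<in> nball N 0 (N a') \<and> z \<in> nball N 0 (N a')} \<subseteq> nball N 0 (N a)"
      using a' by (intro exI[of _ a']) (auto simp: nball_def)
    fix x
    obtain c where c: "0 < N c" "\<forall>t. N t < N c \<longrightarrow> N (x*t) < N a"
      using tiny_mult_left[OF mg a] by blast
    show "\<exists>c. 0 < N c \<and> (*) x ` nball N 0 (N c) \<subseteq> nball N 0 (N a)"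
      using c by (intro exI[of _ c]) (auto simp: nball_def)
  next
    fix a assume a: "0 < N a"
    obtain e where e: "0 < N e" "\<forall>s t. N s < N e \<longrightarrow> N t < N e \<longrightarrow> N (s*t) < N a"
      using tiny_prod[OF mg a] by blast
    show "\<exists>a'. 0 < N a' \<and> {y * z |y z. y \<in> nball N 0 (N a') \<and> z \<in> nball N 0 (N a')} \<subseteq> nball N 0 (N a)"
      using e by (intro exI[of _ e]) (auto simp: nball_def)
    show "\<exists>a'. 0 < N a' \<and> uminus ` nball N 0 (N a') \<subseteq> nball N 0 (N a)"
      using a N_minus[OF mg] by (intro exI[of _ a]) (auto simp: nball_def)
  qed
  have nb: "balls_nhd_base N (ball_topology N)" unfolding balls_nhd_base_def
  proof (intro conjI allI impI)
    show "topspace (ball_topology N) = UNIV" using topspace_bt[OF mg] .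
    fix x a assume "0 < N a"
    then show "\<exists>U. openin (ball_topology N) U \<and> x \<in> U \<and> U \<subseteq> nball N x (N a)"
      using open_sub_ball[OF mg TA] unfolding openin_bt by blast
  next
    fix x U assume "openin (ball_topology N) U \<and> x \<in> U"
    then show "\<exists>a. 0 < N a \<and> nball N x (N a) \<subseteq> U" unfolding openin_bt ballopen_def by blast
  qed
  have loca: "\<exists>b c. 0 < N b \<and> 0 < N c \<and> (\<forall>x' y'. N (x' - x) < N b \<longrightarrow> N (y' - y) < N c \<longrightarrow>
        N ((x' + y') - (x + y)) < N a)" if a: "0 < N a" for x y a
  proof -
    obtain a' where a': "0 < N a'" "\<forall>y z. N y < N a' \<longrightarrow> N z < N a' \<longrightarrow> N (y+z) < N a"
      using TA[OF a] by blast
    show ?thesis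
    proof (intro exI[of _ a'] conjI allI impI)
      fix x' y' assume "N (x' - x) < N a'" "N (y' - y) < N a'"
      then have "N ((x' - x) + (y' - y)) < N a" using a'(2) by blast
      moreover have "(x' - x) + (y' - y) = (x' + y') - (x + y)" by (simp add: algebra_simps)
      ultimately show "N ((x' + y') - (x + y)) < N a" by simp
    qed (use a' in auto)
  qed
  have cadd: "continuous_map (prod_topology (ball_topology N) (ball_topology N)) (ball_topology N) (\<lambda>(x, y). x + y)"
    by (rule cont_prod[OF mg], erule TA, erule loca)
  have locm: "\<exists>b c. 0 < N b \<and> 0 < N c \<and> (\<forall>x' y'. N (x' - x) < N b \<longrightarrow> N (y' - y) < N c \<longrightarrow>
        N ((x' * y') - (x * y)) < N a)" if a: "0 < N a" for x y a
  proof -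
    obtain a1 where a1: "0 < N a1" "\<forall>y z. N y < N a1 \<longrightarrow> N z < N a1 \<longrightarrow> N (y+z) < N a"
      using TA[OF a] by blast
    obtain a2 where a2: "0 < N a2" "\<forall>y z. N y < N a2 \<longrightarrow> N z < N a2 \<longrightarrow> N (y+z) < N a1"
      using TA[OF a1(1)] by blast
    obtain e where e: "0 < N e" "\<forall>s t. N s < N e \<longrightarrow> N t < N e \<longrightarrow> N (s*t) < N a2"
      using tiny_prod[OF mg a2(1)] by blast
    obtain c1 where c1: "0 < N c1" "\<forall>t. N t < N c1 \<longrightarrow> N (x*t) < N a2"
      using tiny_mult_left[OF mg a2(1)] by blast
    obtain c2 where c2: "0 < N c2" "\<forall>t. N t < N c2 \<longrightarrow> N (y*t) < N a1"
      using tiny_mult_left[OF mg a1(1)] by blast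
    obtain d1 where d1: "0 < N d1" "N d1 \<le> N e" "N d1 \<le> N c1" using min_rad[of N e c1, OF e(1) c1(1)] by blast
    obtain d2 where d2: "0 < N d2" "N d2 \<le> N e" "N d2 \<le> N c2" using min_rad[of N e c2, OF e(1) c2(1)] by blast
    have "\<forall>x' y'. N (x' - x) < N d2 \<longrightarrow> N (y' - y) < N d1 \<longrightarrow> N ((x' * y') - (x * y)) < N a"
    proof (intro allI impI)
      fix x' y' assume s: "N (x' - x) < N d2" and t: "N (y' - y) < N d1"
      define S where "S = x' - x"
      define T where "T = y' - y"
      have "N (S*T) < N a2" using e(2) s t d1 d2 unfolding S_def T_def by auto
      moreover have "N (x*T) < N a2" using c1(2) t d1 unfolding T_def by auto
      ultimately have "N (S*T + x*T) < N a1" using a2(2) by blast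
      moreover have "N (y*S) < N a1" using c2(2) s d2 unfolding S_def by auto
      ultimately have "N ((S*T + x*T) + y*S) < N a" using a1(2) by blast
      moreover have "(S*T + x*T) + y*S = x'*y' - x*y" unfolding S_def T_def by (simp add: algebra_simps)
      ultimately show "N ((x' * y') - (x * y)) < N a" by simp
    qed
    then show ?thesis using d1(1) d2(1) by blast
  qed
  have cmul: "continuous_map (prod_topology (ball_topology N) (ball_topology N)) (ball_topology N) (\<lambda>(x, y). x * y)"
    by (rule cont_prod[OF mg], erule TA, erule locm)
  have rt: "ring_topology (ball_topology N)" unfolding ring_topology_def
    using topspace_bt[OF mg] cadd cmul cont_neg[OF mg TA] by blast
  have hs: "Hausdorff_space (ball_topology N)" unfolding Hausdorff_space_def
  proof (intro allI impI)
    fix x y :: 'k assume "x \<in> topspace (ball_topology N) \<and> y \<in> topspace (ball_topology N) \<and> x \<noteq> y"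
    then have "y - x \<noteq> 0" by auto
    then have pa: "0 < N (y - x)" using N_pos[OF mg] by blast
    obtain a' where a': "0 < N a'" "\<forall>u v. N u < N a' \<longrightarrow> N v < N a' \<longrightarrow> N (u+v) < N (y - x)"
      using TA[OF pa] by blast
    obtain U1 where U1: "ballopen N U1" "x \<in> U1" "U1 \<subseteq> nball N x (N a')"
      using open_sub_ball[OF mg TA a'(1)] by blast
    obtain U2 where U2: "ballopen N U2" "y \<in> U2" "U2 \<subseteq> nball N y (N a')"
      using open_sub_ball[OF mg TA a'(1)] by blast
    have "disjnt U1 U2"
      unfolding disjnt_def
    proof (rule equals0I)
      fix z assume "z \<in> U1 \<inter> U2"
      then have "z \<in> U1" "z \<in> U2" by auto
      then have "N (z - x) < N a'" "N (z - y) < N a'" using U1(3) U2(3) by (auto simp: nball_def)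
      then have "N (z - x) < N a'" "N (y - z) < N a'" using N_sym[OF mg, of z y] by auto
      then have "N ((z - x) + (y - z)) < N (y - x)" using a'(2) by blast
      then show False by simp
    qed
    then show "\<exists>U V. openin (ball_topology N) U \<and> openin (ball_topology N) V \<and> x \<in> U \<and> y \<in> V \<and> disjnt U V"
      using U1 U2 unfolding openin_bt by blast
  qed
  show ?thesis using tb nb rt hs by blast
qed

end
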